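(* Let $\mathfrak{n}$ be the real $7$-dimensional Lie algebra with basis $e_1,\dots,e_7$ whose nonzero brackets (up to antisymmetry) are $[e_1,e_2]=e_3$, $[e_1,e_3]=e_4$, $[e_1,e_4]=e_6$, $[e_2,e_3]=e_5$, $[e_2,e_5]=-e_7$, $[e_2,e_6]=-e_7$, $[e_3,e_4]=e_7$. Then $\mathfrak{n}$ is an Einstein nilradical.
   Context: A real nilpotent Lie algebra $\mathfrak{n}$ is called an Einstein nilradical if it admits an inner product such that the left-invariant Riemannian metric it defines on the simply connected nilpotent Lie group with Lie algebra $\mathfrak{n}$ is a nilsoliton, i.e. its Ricci operator satisfies $\mathrm{Ric}=c\,\mathrm{Id}+D$ for some $c\in\mathbb{R}$ and some derivation $D$ of $\mathfrak{n}$. Brackets of basis elements not listed are zero. *)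

theory Defs
  imports "HOL-Analysis.Analysis"
begin

definition lie_bracket :: "(real^'n \<Rightarrow> real^'n \<Rightarrow> real^'n) \<Rightarrow> bool" where
  "lie_bracket br \<longleftrightarrow> (\<forall>x. linear (br x)) \<and> (\<forall>y. linear (\<lambda>x. br x y))
     \<and> (\<forall>x. br x x = 0)
     \<and> (\<forall>x y z. br x (br y z) + br y (br z x) + br z (br x y) = 0)"

text \<open>Nilpotent: some iterated bracket [x_1,[x_2,...,[x_k,y]...]] of fixed length vanishes
  identically (equivalently, the lower central series reaches 0).\<close>
definition nilpotent_bracket :: "(real^'n \<Rightarrow> real^'n \<Rightarrow> real^'n) \<Rightarrow> bool" where
  "nilpotent_bracket br \<longleftrightarrow>
     (\<exists>k. \<forall>xs y. length xs = k \<longrightarrow> foldr (\<lambda>x v. br x v) xs y = 0)"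

definition derivation :: "(real^'n \<Rightarrow> real^'n \<Rightarrow> real^'n) \<Rightarrow> (real^'n \<Rightarrow> real^'n) \<Rightarrow> bool" where
  "derivation br D \<longleftrightarrow> linear D \<and> (\<forall>x y. D (br x y) = br (D x) y + br x (D y))"

text \<open>Inner products on real^'n are represented by their Gram matrix G:
  <x,y>_G = x \<bullet> (G *v y), with G symmetric positive definite.\<close>
definition inner_product_matrix :: "real^'n^'n \<Rightarrow> bool" where
  "inner_product_matrix G \<longleftrightarrow> transpose G = G \<and> (\<forall>x. x \<noteq> 0 \<longrightarrow> x \<bullet> (G *v x) > 0)"

definition ginner :: "real^'n^'n \<Rightarrow> real^'n \<Rightarrow> real^'n \<Rightarrow> real" where
  "ginner G x y = x \<bullet> (G *v y)"

text \<open>Levi-Civita connection of the left-invariant metric on left-invariant fields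
  (Koszul formula): nabla_x y = 1/2([x,y] - ad_x^* y - ad_y^* x), where ad_x^* is the
  G-adjoint of ad_x = br x, namely G^{-1} (ad_x)^T G.\<close>
definition gadj :: "real^'n^'n \<Rightarrow> (real^'n \<Rightarrow> real^'n) \<Rightarrow> real^'n \<Rightarrow> real^'n" where
  "gadj G f v = matrix_inv G *v (transpose (matrix f) *v (G *v v))"

definition levi_civita :: "(real^'n \<Rightarrow> real^'n \<Rightarrow> real^'n) \<Rightarrow> real^'n^'n
     \<Rightarrow> real^'n \<Rightarrow> real^'n \<Rightarrow> real^'n" where
  "levi_civita br G x y = (1/2) *\<^sub>R (br x y - gadj G (br x) y - gadj G (br y) x)"

definition curvature :: "(real^'n \<Rightarrow> real^'n \<Rightarrow> real^'n) \<Rightarrow> real^'n^'n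
     \<Rightarrow> real^'n \<Rightarrow> real^'n \<Rightarrow> real^'n \<Rightarrow> real^'n" where
  "curvature br G x y z = levi_civita br G x (levi_civita br G y z)
      - levi_civita br G y (levi_civita br G x z) - levi_civita br G (br x y) z"

definition ricci_tensor :: "(real^'n \<Rightarrow> real^'n \<Rightarrow> real^'n) \<Rightarrow> real^'n^'n
     \<Rightarrow> real^'n \<Rightarrow> real^'n \<Rightarrow> real" where
  "ricci_tensor br G y z = trace (matrix (\<lambda>x. curvature br G x y z))"

text \<open>Ricci operator: the G-self-adjoint map with <Ric y, z>_G = ric(y,z).\<close>
definition ricci_operator :: "(real^'n \<Rightarrow> real^'n \<Rightarrow> real^'n) \<Rightarrow> real^'n^'n
     \<Rightarrow> real^'n \<Rightarrow> real^'n" where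
  "ricci_operator br G y = matrix_inv G *v (\<chi> k. ricci_tensor br G y (axis k 1))"

definition einstein_nilradical :: "(real^'n \<Rightarrow> real^'n \<Rightarrow> real^'n) \<Rightarrow> bool" where
  "einstein_nilradical br \<longleftrightarrow> lie_bracket br \<and> nilpotent_bracket br \<and>
     (\<exists>G c D. inner_product_matrix G \<and> derivation br D \<and>
        ricci_operator br G = (\<lambda>x. c *\<^sub>R x + D x))"

text \<open>Basis e_1,...,e_7 of real^7 (e_k is the standard unit vector at index of_nat k of type 7;
  k = 1..7 gives the 7 distinct indices).\<close>
definition e7 :: "nat \<Rightarrow> real^7" where
  "e7 k = axis (of_nat k) 1"

definition brb :: "nat \<Rightarrow> nat \<Rightarrow> real^7" where
  "brb i j =
    (if (i,j) = (1,2) then e7 3 else if (i,j) = (2,1) then - e7 3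
     else if (i,j) = (1,3) then e7 4 else if (i,j) = (3,1) then - e7 4
     else if (i,j) = (1,4) then e7 6 else if (i,j) = (4,1) then - e7 6
     else if (i,j) = (2,3) then e7 5 else if (i,j) = (3,2) then - e7 5
     else if (i,j) = (2,5) then - e7 7 else if (i,j) = (5,2) then e7 7
     else if (i,j) = (2,6) then - e7 7 else if (i,j) = (6,2) then e7 7
     else if (i,j) = (3,4) then e7 7 else if (i,j) = (4,3) then - e7 7
     else 0)"

definition brn :: "real^7 \<Rightarrow> real^7 \<Rightarrow> real^7" where
  "brn x y = (\<Sum>i\<in>{1..7}. \<Sum>j\<in>{1..7}. (x $ of_nat i * y $ of_nat j) *\<^sub>R brb i j)"

end

theory Submission
  imports Defs
begin


lemma exhaust7:
  fixes x :: 7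
  shows "x = 0 \<or> x = 1 \<or> x = 2 \<or> x = 3 \<or> x = 4 \<or> x = 5 \<or> x = 6"
proof (induct x)
  case (of_int z)
  then have "z = 0 \<or> z = 1 \<or> z = 2 \<or> z = 3 \<or> z = 4 \<or> z = 5 \<or> z = 6" by fastforce
  then show ?case by auto
qed

lemma forall7: "(\<forall>i::7. P i) \<longleftrightarrow> P 1 \<and> P 2 \<and> P 3 \<and> P 4 \<and> P 5 \<and> P 6 \<and> P 0"
  by (metis exhaust7)

lemma UNIV7: "(UNIV::7 set) = {1,2,3,4,5,6,0}"
  using exhaust7 by auto

lemma sum7: "sum f (UNIV::7 set) = f 1 + f 2 + f 3 + f 4 + f 5 + f 6 + f 0"
  unfolding UNIV7 by (simp add: ac_simps)

definition v7 :: "'a \<Rightarrow> 'a \<Rightarrow> 'a \<Rightarrow> 'a \<Rightarrow> 'a \<Rightarrow> 'a \<Rightarrow> 'a \<Rightarrow> 'a^7" where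
  "v7 a b c d e f g = (\<chi> i. if i = 1 then a else if i = 2 then b else if i = 3 then c
     else if i = 4 then d else if i = 5 then e else if i = 6 then f else g)"

lemma v7_nth[simp]:
  "v7 a b c d e f g $ 1 = a" "v7 a b c d e f g $ 2 = b" "v7 a b c d e f g $ 3 = c"
  "v7 a b c d e f g $ 4 = d" "v7 a b c d e f g $ 5 = e" "v7 a b c d e f g $ 6 = f"
  "v7 a b c d e f g $ 0 = g"
  by (simp_all add: v7_def)

lemma vec_v7: "x = v7 (x$1) (x$2) (x$3) (x$4) (x$5) (x$6) (x$0)"
  by (simp add: vec_eq_iff forall7)

lemma chi_v7: "(\<chi> i. f i) = v7 (f 1) (f 2) (f 3) (f 4) (f 5) (f 6) (f 0)"
  by (simp add: vec_eq_iff forall7)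

lemma v7_eq_iff: "v7 a b c d e f g = v7 a' b' c' d' e' f' g' \<longleftrightarrow>
   a = a' \<and> b = b' \<and> c = c' \<and> d = d' \<and> e = e' \<and> f = f' \<and> g = g'"
  by (auto simp add: vec_eq_iff forall7)

lemma v7_ops[simp]:
  "v7 a b c d e f g + v7 a' b' c' d' e' f' g' = v7 (a+a') (b+b') (c+c') (d+d') (e+e') (f+f') (g+g')"
  "v7 a b c d e f g - v7 a' b' c' d' e' f' g' = v7 (a-a') (b-b') (c-c') (d-d') (e-e') (f-f') (g-g')"
  "r *\<^sub>R v7 a1 b1 c1 d1 e1 f1 g1 = v7 (r*a1) (r*b1) (r*c1) (r*d1) (r*e1) (r*f1) (r*g1)"
  by (simp_all add: vec_eq_iff forall7)

lemma inner_v7[simp]: "v7 a b c d e f g \<bullet> v7 a' b' c' d' e' f' g' = a*a' + b*b' + c*c' + d*d' + e*e' + f*f' + g*g'"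
  by (simp add: inner_vec_def sum7)

lemma mv_v7[simp]: "(v7 r1 r2 r3 r4 r5 r6 r7 :: real^7^7) *v x = v7 (r1 \<bullet> x) (r2 \<bullet> x) (r3 \<bullet> x) (r4 \<bullet> x) (r5 \<bullet> x) (r6 \<bullet> x) (r7 \<bullet> x)"
  by (simp add: vec_eq_iff forall7 matrix_vector_mult_def inner_vec_def)

lemma axis7:
  "axis 1 (1::real) = v7 1 0 0 0 0 0 0" "axis 2 (1::real) = v7 0 1 0 0 0 0 0"
  "axis 3 (1::real) = v7 0 0 1 0 0 0 0" "axis 4 (1::real) = v7 0 0 0 1 0 0 0"
  "axis 5 (1::real) = v7 0 0 0 0 1 0 0" "axis 6 (1::real) = v7 0 0 0 0 0 1 0"
  "axis 0 (1::real) = v7 0 0 0 0 0 0 1" "axis 7 (1::real) = v7 0 0 0 0 0 0 1"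
  by (simp_all add: vec_eq_iff forall7 axis_def)

definition brc :: "real^7 \<Rightarrow> real^7 \<Rightarrow> real^7" where
  "brc x y = v7 0 0 (x$1*y$2 - x$2*y$1) (x$1*y$3 - x$3*y$1) (x$2*y$3 - x$3*y$2) (x$1*y$4 - x$4*y$1)
     (-(x$2*y$5 - x$5*y$2) - (x$2*y$6 - x$6*y$2) + (x$3*y$4 - x$4*y$3))"

lemma brn_brc: "brn = brc"
proof (intro ext)
  fix x y :: "real^7"
  have s: "{1..7::nat} = {1,2,3,4,5,6,7}" by auto
  show "brn x y = brc x y"
    unfolding brn_def brc_def s
    by (simp add: brb_def e7_def axis7 vec_eq_iff forall7 algebra_simps)
qed



lemma zero_v7: "(0::real^7) = v7 0 0 0 0 0 0 0"
  by (simp add: vec_eq_iff forall7)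

lemma inner_v7L[simp]: "v7 a b c d e f g \<bullet> (y::real^7) = a*y$1 + b*y$2 + c*y$3 + d*y$4 + e*y$5 + f*y$6 + g*y$0"
  by (simp add: inner_vec_def sum7)

lemma inner_v7R[simp]: "(y::real^7) \<bullet> v7 a b c d e f g = y$1*a + y$2*b + y$3*c + y$4*d + y$5*e + y$6*f + y$0*g"
  by (simp add: inner_vec_def sum7)

lemma brc_nth[simp]:
  "brc x y $ 1 = 0" "brc x y $ 2 = 0" "brc x y $ 3 = x$1*y$2 - x$2*y$1"
  "brc x y $ 4 = x$1*y$3 - x$3*y$1" "brc x y $ 5 = x$2*y$3 - x$3*y$2" "brc x y $ 6 = x$1*y$4 - x$4*y$1"
  "brc x y $ 0 = -(x$2*y$5 - x$5*y$2) - (x$2*y$6 - x$6*y$2) + (x$3*y$4 - x$4*y$3)"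
  by (simp_all add: brc_def)

lemma lie_brc: "lie_bracket brc"
  unfolding lie_bracket_def
proof (intro conjI allI)
  fix x show "linear (brc x)"
    by (rule linearI) (simp_all add: vec_eq_iff forall7 algebra_simps)
next
  fix y show "linear (\<lambda>x. brc x y)"
    by (rule linearI) (simp_all add: vec_eq_iff forall7 algebra_simps)
next
  fix x show "brc x x = 0"
    by (simp add: vec_eq_iff forall7)
next
  fix x y z show "brc x (brc y z) + brc y (brc z x) + brc z (brc x y) = 0"
    by (simp add: vec_eq_iff forall7 algebra_simps)
qed

definition Fw :: "nat \<Rightarrow> real^7 \<Rightarrow> bool" where
  "Fw m v \<longleftrightarrow> (1 < m \<longrightarrow> v$1 = 0) \<and> (2 < m \<longrightarrow> v$2 = 0) \<and> (3 < m \<longrightarrow> v$3 = 0)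
     \<and> (4 < m \<longrightarrow> v$4 = 0) \<and> (5 < m \<longrightarrow> v$5 = 0 \<and> v$6 = 0) \<and> (7 < m \<longrightarrow> v$0 = 0)"

lemma Fw_step: "Fw m v \<Longrightarrow> Fw (Suc m) (brc x v)"
  unfolding Fw_def by auto

lemma Fw_fold: "Fw (Suc (length xs)) (foldr (\<lambda>x v. brc x v) xs y)"
proof (induction xs)
  case Nil then show ?case by (simp add: Fw_def)
next
  case (Cons a xs) then show ?case using Fw_step by simp
qed

lemma nil_brc: "nilpotent_bracket brc"
  unfolding nilpotent_bracket_def
proof (intro exI[of _ 7] allI impI)
  fix xs :: "(real^7) list" and y assume "length xs = 7"
  then have "Fw 8 (foldr (\<lambda>x v. brc x v) xs y)" using Fw_fold[of xs y] by simp
  then show "foldr (\<lambda>x v. brc x v) xs y = 0" by (simp add: Fw_def vec_eq_iff forall7)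
qed

definition kap :: real where "kap = 6534047/17328"

definition Dm :: "real^7 \<Rightarrow> real^7" where
  "Dm x = v7 (9*kap*x$1) (18*kap*x$2) (27*kap*x$3) (36*kap*x$4) (45*kap*x$5) (45*kap*x$6) (63*kap*x$0)"

lemma der_Dm: "derivation brc Dm"
  unfolding derivation_def
proof (intro conjI allI)
  show "linear Dm"
    by (rule linearI) (simp_all add: Dm_def vec_eq_iff forall7 algebra_simps)
next
  fix x y show "Dm (brc x y) = brc (Dm x) y + brc x (Dm y)"
    by (simp add: Dm_def vec_eq_iff forall7 algebra_simps)
qed

definition Gm :: "real^7^7" where
  "Gm = v7 (v7 (76/159367) 0 0 0 0 0 0) (v7 0 (114/12259) 0 0 0 0 0) (v7 0 0 (19/533) 0 0 0 0)
          (v7 0 0 0 (1/6) 0 0 0) (v7 0 0 0 0 1 (1/2) 0) (v7 0 0 0 0 (1/2) (106/171) 0)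
          (v7 0 0 0 0 0 0 (3289/76))"

definition Hm :: "real^7^7" where
  "Hm = v7 (v7 (159367/76) 0 0 0 0 0 0) (v7 0 (12259/114) 0 0 0 0 0) (v7 0 0 (533/19) 0 0 0 0)
          (v7 0 0 0 6 0 0 0) (v7 0 0 0 0 (424/253) (-342/253) 0) (v7 0 0 0 0 (-342/253) (684/253) 0)
          (v7 0 0 0 0 0 0 (76/3289))"

lemma GH: "Gm ** Hm = mat 1"
  by (simp add: Gm_def Hm_def vec_eq_iff forall7 matrix_matrix_mult_def sum7 mat_def)

lemma HG: "Hm ** Gm = mat 1"
  by (simp add: Gm_def Hm_def vec_eq_iff forall7 matrix_matrix_mult_def sum7 mat_def)

lemma inv_G: "matrix_inv Gm = Hm"
  unfolding matrix_inv_def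
proof (rule some_equality)
  show "Gm ** Hm = mat 1 \<and> Hm ** Gm = mat 1" using GH HG by simp
next
  fix A assume A: "Gm ** A = mat 1 \<and> A ** Gm = mat 1"
  have "A = A ** (Gm ** Hm)" using GH by (simp add: matrix_mul_rid)
  also have "\<dots> = (A ** Gm) ** Hm" by (simp add: matrix_mul_assoc)
  also have "\<dots> = Hm" using A by (simp add: matrix_mul_lid)
  finally show "A = Hm" .
qed

lemma Gm_ip: "inner_product_matrix Gm"
  unfolding inner_product_matrix_def
proof (intro conjI allI impI)
  show "transpose Gm = Gm"
    by (simp add: Gm_def vec_eq_iff forall7 transpose_def)
next
  fix x :: "real^7" assume nz: "x \<noteq> 0"
  have eq: "x \<bullet> (Gm *v x) = (76/159367) * (x$1)^2 + (114/12259) * (x$2)^2 + (19/533) * (x$3)^2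
      + (1/6) * (x$4)^2 + (x$5 + x$6/2)^2 + (253/684) * (x$6)^2 + (3289/76) * (x$0)^2"
    by (simp add: Gm_def inner_vec_def sum7 power2_eq_square algebra_simps)
  show "x \<bullet> (Gm *v x) > 0"
  proof (rule ccontr)
    assume "\<not> x \<bullet> (Gm *v x) > 0"
    then have le: "x \<bullet> (Gm *v x) \<le> 0" by simp
    have s: "(x$1)^2 \<ge> 0" "(x$2)^2 \<ge> 0" "(x$3)^2 \<ge> 0" "(x$4)^2 \<ge> 0" "(x$5 + x$6/2)^2 \<ge> 0"
       "(x$6)^2 \<ge> 0" "(x$0)^2 \<ge> 0" by simp_all
    have "(x$1)^2 = 0" "(x$2)^2 = 0" "(x$3)^2 = 0" "(x$4)^2 = 0" "(x$5 + x$6/2)^2 = 0"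
       "(x$6)^2 = 0" "(x$0)^2 = 0" using le s unfolding eq by linarith+
    then have "x$1 = 0" "x$2 = 0" "x$3 = 0" "x$4 = 0" "x$5 = 0" "x$6 = 0" "x$0 = 0" by simp_all
    then have "x = 0" by (simp add: vec_eq_iff forall7)
    with nz show False by simp
  qed
qed

lemma tmv: "transpose (matrix f) *v w = (\<chi> j. f (axis j 1) \<bullet> (w::real^'n))"
  by (simp add: vec_eq_iff matrix_vector_mult_def transpose_def matrix_def inner_vec_def mult.commute)

definition lcf :: "real^7 \<Rightarrow> real^7 \<Rightarrow> real^7" where
  "lcf x y = v7 ((299/8) * x$2 * y$3 + (299/8) * x$3 * y$2 + (159367/912) * x$3 * y$4 + (159367/912) * x$4 * y$3 + (159367/304) * x$4 * y$5 + (8446451/12996) * x$4 * y$6 + (159367/304) * x$5 * y$4 + (8446451/12996) * x$6 * y$4) ((- 23/12) * x$1 * y$3 + (- 23/12) * x$3 * y$1 + (12259/228) * x$3 * y$5 + (12259/456) * x$3 * y$6 + (12259/228) * x$5 * y$3 + (- 40319851/17328) * x$5 * y$0 + (12259/456) * x$6 * y$3 + (- 40319851/17328) * x$6 * y$0 + (- 40319851/17328) * x$0 * y$5 + (- 40319851/17328) * x$0 * y$6) ((1/2) * x$1 * y$2 + (- 533/228) * x$1 * y$4 + (- 1/2) * x$2 * y$1 + (- 533/38) * x$2 * y$5 + (- 533/76) * x$2 * y$6 + (- 533/228) * x$4 * y$1 + (1753037/2888) * x$4 * y$0 + (- 533/38) * x$5 * y$2 + (- 533/76) * x$6 * y$2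 + (1753037/2888) * x$0 * y$4) ((1/2) * x$1 * y$3 + (- 3/2) * x$1 * y$5 + (- 106/57) * x$1 * y$6 + (- 1/2) * x$3 * y$1 + (- 9867/76) * x$3 * y$0 + (- 3/2) * x$5 * y$1 + (- 106/57) * x$6 * y$1 + (- 9867/76) * x$0 * y$3) ((1/2) * x$2 * y$3 + (533/76) * x$2 * y$0 + (- 1/2) * x$3 * y$2 + (533/76) * x$0 * y$2) ((1/2) * x$1 * y$4 + (117/4) * x$2 * y$0 + (- 1/2) * x$4 * y$1 + (117/4) * x$0 * y$2) ((- 1/2) * x$2 * y$5 + (- 1/2) * x$2 * y$6 + (1/2) * x$3 * y$4 + (- 1/2) * x$4 * y$3 + (1/2) * x$5 * y$2 + (1/2) * x$6 * y$2)"

lemma LC: "levi_civita brn Gm x y = lcf x y"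
  unfolding levi_civita_def gadj_def inv_G tmv brn_brc
  by (simp add: chi_v7 axis7 Gm_def Hm_def lcf_def vec_eq_iff forall7 algebra_simps)



lemma RT: "ricci_tensor brn Gm y z = (Gm *v (((-43)*kap) *\<^sub>R y + Dm y)) \<bullet> z"
  unfolding ricci_tensor_def trace_def curvature_def brn_brc LC[unfolded brn_brc]
  apply (simp add: matrix_def sum7 axis7 lcf_def Gm_def Dm_def kap_def algebra_simps)
  apply (simp add: field_simps)
  done

lemma RO: "ricci_operator brn Gm = (\<lambda>x. ((-43)*kap) *\<^sub>R x + Dm x)"
proof (rule ext)
  fix y
  have "(\<chi> k. ricci_tensor brn Gm y (axis k 1)) = Gm *v (((-43)*kap) *\<^sub>R y + Dm y)"
    by (simp add: RT inner_axis vec_eq_iff)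
  then show "ricci_operator brn Gm y = ((-43)*kap) *\<^sub>R y + Dm y"
    unfolding ricci_operator_def inv_G by (simp add: matrix_vector_mul_assoc HG)
qed

theorem mainTheorem12:
  shows "einstein_nilradical brn"
  unfolding einstein_nilradical_def
proof (intro conjI exI)
  show "lie_bracket brn" using lie_brc brn_brc by simp
  show "nilpotent_bracket brn" using nil_brc brn_brc by simp
  show "inner_product_matrix Gm" by (rule Gm_ip)
  show "derivation brn Dm" using der_Dm brn_brc by simp
  show "ricci_operator brn Gm = (\<lambda>x. ((-43)*kap) *\<^sub>R x + Dm x)" by (rule RO)
qed


end
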